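(* Let $A,B,D>0$ be constants, let $\lambda\in\mathbb{R}$, and let $f:(0,\infty)\to\mathbb{R}$ be defined by $$f(X)=A(2DX)^{-1/2}-B(2DX)^{-3/2}.$$ Let $\alpha>0$, $\beta>0$, and let $g:(0,\infty)\to(-\infty,0]$ be given by $g(X)=-\beta X^{\alpha}$. Let $V_\lambda:(0,\infty)\to\mathbb{R}$ be a potential satisfying $-V_\lambda'(X)=\lambda-f(X)+g(X)$ for all $X>0$ (i.e. $V_\lambda$ is an antiderivative of $-(\lambda-f+g)$, determined up to an additive constant). Then $V_\lambda$ is confining, that is, $$\lim_{X\to0^+}V_\lambda(X)=\lim_{X\to\infty}V_\lambda(X)=+\infty,$$ and for every $\xi>0$, $$\int_0^\infty e^{-\xi V_\lambda(X)}\,dX<\infty.$$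
   Context: This potential governs the stochastic droplet growth model $\dot X=\lambda-f(X)+g(X)+\sigma(X)\dot W_t$, where $X=r^2/(2D)$ is the scaled squared droplet radius, $f$ is the Köhler curve, $g$ a sink term, and $W_t$ a Brownian motion. *)

theory Defs
  imports "HOL-Analysis.Analysis"
begin

end

theory Submission
  imports Defs "HOL-Real_Asymp.Real_Asymp"
begin

lemma bounded_below_aux:
  fixes U :: "real \<Rightarrow> real"
  assumes cont: "continuous_on {0<..} U"
    and l0: "filterlim U at_top (at_right 0)" and l1: "filterlim U at_top at_top"
  shows "\<exists>L. \<forall>x>0. L \<le> U x"
proof -
  have "eventually (\<lambda>x. U x \<ge> 0) (at_right 0)"
    using l0 by (simp add: filterlim_at_top)
  then obtain d where d: "d > 0" "\<And>x. 0 < x \<Longrightarrow> x < d \<Longrightarrow> U x \<ge> 0"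
    unfolding eventually_at_right[OF zero_less_one] eventually_at_right_field by auto
  have "eventually (\<lambda>x. U x \<ge> 0) at_top"
    using l1 by (simp add: filterlim_at_top)
  then obtain M where M: "\<And>x. x \<ge> M \<Longrightarrow> U x \<ge> 0"
    unfolding eventually_at_top_linorder by auto
  define M' where "M' = max M d"
  have "continuous_on {d..M'} U"
    using d(1) by (intro continuous_on_subset[OF cont]) auto
  moreover have "{d..M'} \<noteq> {}" using M'_def by auto
  ultimately obtain y where y: "y \<in> {d..M'}" "\<And>z. z \<in> {d..M'} \<Longrightarrow> U y \<le> U z"
    using continuous_attains_inf[of "{d..M'}" U] by auto
  show ?thesis
  proof (intro exI allI impI)
    fix x :: real assume x: "x > 0"
    show "min 0 (U y) \<le> U x"
    proof (cases "x < d")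
      case True
      then have "0 \<le> U x" using d x by auto
      then show ?thesis by (simp add: min_def)
    next
      case False
      show ?thesis
      proof (cases "x \<ge> M")
        case True
        then have "0 \<le> U x" using M by auto
        then show ?thesis by (simp add: min_def)
      next
        case False2: False
        then have "x \<in> {d..M'}" using False M'_def by auto
        then have "U y \<le> U x" using y by auto
        then show ?thesis by (simp add: min_def)
      qed
    qed
  qed
qed

lemma asy1:
  fixes a b c xi al lam k :: real
  assumes "al > 0" "a > 0" "b > 0" "c > 0" "xi > 0"
  shows "filterlim (\<lambda>x::real. xi * (k + (- lam * x + a * x powr (1/2) + b * x powr (-1/2) + c * x powr (al+1))) - x) at_top at_top"
  using assms by real_asymp

lemma asy2:
  fixes a b c xi al lam k :: real
  assumes "al > 0" "a > 0" "b > 0" "c > 0" "xi > 0"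
  shows "filterlim (\<lambda>x::real. xi * (k + (- lam * x + a * x powr (1/2) + b * x powr (-1/2) + c * x powr (al+1))) - x) at_top (at_right 0)"
  using assms by real_asymp

lemma asy3:
  fixes a b c al lam k :: real
  assumes "al > 0" "a > 0" "b > 0" "c > 0"
  shows "filterlim (\<lambda>x::real. k + (- lam * x + a * x powr (1/2) + b * x powr (-1/2) + c * x powr (al+1))) at_top at_top"
  using assms by real_asymp

lemma asy4:
  fixes a b c al lam k :: real
  assumes "al > 0" "a > 0" "b > 0" "c > 0"
  shows "filterlim (\<lambda>x::real. k + (- lam * x + a * x powr (1/2) + b * x powr (-1/2) + c * x powr (al+1))) at_top (at_right 0)"
  using assms by real_asymp

theorem proposition2:
  fixes A B D lam \<alpha> \<beta> :: real
    and f g V :: "real \<Rightarrow> real"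
  assumes "A > 0" and "B > 0" and "D > 0"
    and "\<alpha> > 0" and "\<beta> > 0"
    and hf: "\<And>X. X > 0 \<Longrightarrow> f X = A * (2 * D * X) powr (-1/2) - B * (2 * D * X) powr (-3/2)"
    and hg: "\<And>X. X > 0 \<Longrightarrow> g X = - \<beta> * X powr \<alpha>"
    and V_deriv: "\<And>X. X > 0 \<Longrightarrow> (V has_real_derivative (- (lam - f X + g X))) (at X)"
  shows "filterlim V at_top (at_right 0) \<and> filterlim V at_top at_top \<and>
         (\<forall>\<xi>::real. \<xi> > 0 \<longrightarrow> set_integrable lborel {0<..} (\<lambda>X. exp (- \<xi> * V X)))"
proof -
  define a1 where "a1 = 2 * A * (2 * D) powr (-1/2)"
  define b1 where "b1 = 2 * B * (2 * D) powr (-3/2)"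
  define c1 where "c1 = \<beta> / (\<alpha> + 1)"
  have a1: "a1 > 0" and b1: "b1 > 0" and c1: "c1 > 0"
    using assms by (auto simp: a1_def b1_def c1_def)
  define W where "W = (\<lambda>x::real. - lam * x + a1 * x powr (1/2) + b1 * x powr (-1/2) + c1 * x powr (\<alpha>+1))"
  have Wd: "(W has_real_derivative (- (lam - f x + g x))) (at x)" if x: "x > 0" for x
  proof -
    have "(W has_real_derivative (- lam * 1 + a1 * ((1/2) * x powr (1/2 - 1)) + b1 * ((-1/2) * x powr (-1/2 - 1))
        + c1 * ((\<alpha>+1) * x powr (\<alpha>+1-1)))) (at x)"
      unfolding W_def using x
      by (intro DERIV_add DERIV_cmult has_real_derivative_powr DERIV_ident)
    moreover have E: "- lam * 1 + a1 * ((1/2) * x powr (1/2 - 1)) + b1 * ((-1/2) * x powr (-1/2 - 1))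
        + c1 * ((\<alpha>+1) * x powr (\<alpha>+1-1)) = - (lam - f x + g x)"
    proof -
      have e1: "A * (2 * D * x) powr (-1/2) = a1 * ((1/2) * x powr (1/2 - 1))"
        using x assms by (simp add: a1_def powr_mult)
      have e2: "B * (2 * D * x) powr (-3/2) = - (b1 * ((-1/2) * x powr (-1/2 - 1)))"
        using x assms by (simp add: b1_def powr_mult)
      have e3': "c1 * (\<alpha>+1) = \<beta>"
        using assms by (simp add: c1_def)
      have e3: "c1 * ((\<alpha>+1) * x powr (\<alpha>+1-1)) = \<beta> * x powr \<alpha>"
        by (simp add: mult.assoc[symmetric] e3')
      show ?thesis unfolding hf[OF x] hg[OF x] e1 e2 e3 by simp
    qed
    ultimately show ?thesis by (simp only: E)
  qed
  have "\<exists>c. \<forall>x\<in>{0<..}. (\<lambda>x. V x - W x) x = c"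
  proof (rule has_field_derivative_zero_constant)
    show "convex {0::real<..}" by simp
    fix x :: real assume "x \<in> {0<..}"
    then have x0: "x > 0" by simp
    have "((\<lambda>x. V x - W x) has_field_derivative (- (lam - f x + g x)) - (- (lam - f x + g x))) (at x)"
      by (rule DERIV_diff[OF V_deriv[OF x0] Wd[OF x0]])
    then have "((\<lambda>x. V x - W x) has_field_derivative 0) (at x)" by simp
    then show "((\<lambda>x. V x - W x) has_field_derivative 0) (at x within {0<..})"
      by (rule has_field_derivative_at_within)
  qed
  then obtain c where c0: "\<forall>x\<in>{0<..}. V x - W x = c" by auto
  have c: "V x = c + W x" if "x > 0" for x
  proof -
    have "V x - W x = c" using c0 that by simp
    then show ?thesis by linarith
  qed
  have ev0: "eventually (\<lambda>x. V x = c + W x) (at_right (0::real))"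
    using eventually_at_right_less[of 0] by eventually_elim (use c in auto)
  have ev1: "eventually (\<lambda>x. V x = c + W x) at_top"
    using eventually_gt_at_top[of 0] by eventually_elim (use c in auto)
  have L0: "filterlim V at_top (at_right 0)"
  proof -
    have "filterlim (\<lambda>x. c + W x) at_top (at_right 0)"
      unfolding W_def by (rule asy4[OF assms(4) a1 b1 c1])
    then show ?thesis using filterlim_cong[OF refl refl ev0] by simp
  qed
  have L1: "filterlim V at_top at_top"
  proof -
    have "filterlim (\<lambda>x. c + W x) at_top at_top"
      unfolding W_def by (rule asy3[OF assms(4) a1 b1 c1])
    then show ?thesis using filterlim_cong[OF refl refl ev1] by simp
  qed
  have contV: "continuous_on {0<..} V"
    by (rule continuous_at_imp_continuous_on) (use V_deriv DERIV_isCont in auto)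
  have INT: "set_integrable lborel {0<..} (\<lambda>X. exp (- \<xi> * V X))" if xi: "\<xi> > 0" for \<xi> :: real
  proof -
    define U where "U = (\<lambda>x. \<xi> * V x - x)"
    have contU: "continuous_on {0<..} U"
      unfolding U_def by (intro continuous_intros contV)
    have ev0': "eventually (\<lambda>x. U x = \<xi> * (c + W x) - x) (at_right (0::real))"
      using ev0 by eventually_elim (simp add: U_def)
    have ev1': "eventually (\<lambda>x. U x = \<xi> * (c + W x) - x) at_top"
      using ev1 by eventually_elim (simp add: U_def)
    have U0: "filterlim U at_top (at_right 0)"
    proof -
      have "filterlim (\<lambda>x. \<xi> * (c + W x) - x) at_top (at_right 0)"
        unfolding W_def by (rule asy2[OF assms(4) a1 b1 c1 xi])
      then show ?thesis using filterlim_cong[OF refl refl ev0'] by simp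
    qed
    have U1: "filterlim U at_top at_top"
    proof -
      have "filterlim (\<lambda>x. \<xi> * (c + W x) - x) at_top at_top"
        unfolding W_def by (rule asy1[OF assms(4) a1 b1 c1 xi])
      then show ?thesis using filterlim_cong[OF refl refl ev1'] by simp
    qed
    obtain L where L: "\<And>x. x > 0 \<Longrightarrow> L \<le> U x"
      using bounded_below_aux[OF contU U0 U1] by auto
    have bnd: "norm (exp (- \<xi> * V x)) \<le> exp (- L) * exp (- 1 * x)" if "x \<in> {0<..}" for x
    proof -
      have "L \<le> \<xi> * V x - x" using L[of x] that by (auto simp: U_def)
      then have "exp (- \<xi> * V x) \<le> exp (- L + - x)" by simp
      also have "exp (- L + - x) = exp (- L) * exp (- 1 * x)" by (simp add: exp_add [symmetric])
      finally show ?thesis by simp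
    qed
    have gi0: "(\<lambda>x. exp (- L) * exp (- 1 * x)) integrable_on {0::real..}"
      using integrable_on_cmult_left[OF integrable_on_exp_minus_to_infinity[of 1 0], of "exp (- L)"]
      by simp
    have "negligible (sym_diff {0::real..} {0<..})"
    proof -
      have "sym_diff {0::real..} {0<..} = {0}" by auto
      then show ?thesis by simp
    qed
    then have gi: "(\<lambda>x. exp (- L) * exp (- 1 * x)) integrable_on {0::real<..}"
      using gi0 integrable_spike_set_eq by blast
    have contH: "continuous_on {0<..} (\<lambda>X. exp (- \<xi> * V X))"
      by (intro continuous_intros contV)
    have "(\<lambda>X. exp (- \<xi> * V X)) absolutely_integrable_on {0<..}"
      by (rule measurable_bounded_by_integrable_imp_absolutely_integrable[OF
            continuous_imp_measurable_on_sets_lebesgue[OF contH] _ gi bnd]) auto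
    then have "integrable lebesgue (\<lambda>x. indicator {0<..} x *\<^sub>R exp (- \<xi> * V x))"
      by (simp add: set_integrable_def)
    moreover have "(\<lambda>x. indicator {0::real<..} x *\<^sub>R exp (- \<xi> * V x)) \<in> borel_measurable lborel"
      using borel_measurable_continuous_on_indicator[OF _ contH] by simp
    ultimately show ?thesis
      unfolding set_integrable_def using integrable_completion by blast
  qed
  show ?thesis using L0 L1 INT by blast
qed

end
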